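(* Let $w$ be an infinite word over the binary alphabet $\{0,1\}$. 1. If $w$ is of bounded width, then $w$ is weak abelian periodic. 2. There exists an infinite binary word of bounded width which is not bounded weak abelian periodic. 3. If $w$ is bounded weak abelian periodic, then $w$ is of bounded width.
   Context: For a finite word $u$ and a letter $a$, $|u|_a$ is the number of occurrences of $a$ in $u$, and for nonempty $u$ the frequency of $a$ in $u$ is $\rho_a(u)=|u|_a/|u|$. An infinite word $w$ over a finite alphabet $\Sigma$ is weak abelian periodic (WAP) if $w=v_0v_1v_2\cdots$ with $v_0$ a finite word and $v_1,v_2,\dots$ nonempty finite words such that $\rho_a(v_i)=\rho_a(v_j)$ for all $a\in\Sigma$ and all $i,j\ge 1$. It is bounded WAP if moreover such a factorization exists with $|v_i|\le C$ for all $i$, for some constant $C$. The graphic $g_w$ of a binary word $w=w_1w_2\cdots$ is the piecewise linear path in $\mathbb{R}^2$ starting at $(0,0)$ where the $n$-th step moves by the vector $(1,-1)$ if $w_n=0$ and by $(1,1)$ if $w_n=1$; thus $g_w$ is a function with $g_w(n)=|w_1\cdots w_n|_1-|w_1\cdots w_n|_0$ at integers, linear in between. A binary infinite word $w$ is of bounded width if there exist rational numbers $a,b_1,b_2$ with $ax+b_1\le g_w(x)\le ax+b_2$ for all $x\ge 0$. *)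

theory Defs
  imports Complex_Main
begin

text \<open>Infinite words are functions nat => 'a; letter w_{n+1} of the paper is w n.
  Binary words are nat => bool, with False standing for letter 0 and True for letter 1.\<close>

definition factor :: "(nat \<Rightarrow> 'a) \<Rightarrow> nat \<Rightarrow> nat \<Rightarrow> 'a list" where
  "factor w i j = map w [i..<j]"

definition freq :: "'a \<Rightarrow> 'a list \<Rightarrow> real" where
  "freq a u = real (count_list u a) / real (length u)"

text \<open>Factorization w = v0 v1 v2 ... with cut points p 0 < p 1 < ...:
  v0 = w[0, p 0), v_{i+1} = w[p i, p (i+1)) (nonempty by strict monotonicity).\<close>

definition WAP :: "(nat \<Rightarrow> 'a) \<Rightarrow> bool" where
  "WAP w \<longleftrightarrow> (\<exists>p::nat \<Rightarrow> nat. strict_mono p \<and>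
     (\<forall>i j a. freq a (factor w (p i) (p (Suc i))) = freq a (factor w (p j) (p (Suc j)))))"

definition bounded_WAP :: "(nat \<Rightarrow> 'a) \<Rightarrow> bool" where
  "bounded_WAP w \<longleftrightarrow> (\<exists>p::nat \<Rightarrow> nat. \<exists>C::nat. strict_mono p \<and>
     (\<forall>i j a. freq a (factor w (p i) (p (Suc i))) = freq a (factor w (p j) (p (Suc j)))) \<and>
     (\<forall>i. p (Suc i) - p i \<le> C))"

definition step :: "bool \<Rightarrow> int" where
  "step b = (if b then 1 else -1)"

definition graph_int :: "(nat \<Rightarrow> bool) \<Rightarrow> nat \<Rightarrow> int" where
  "graph_int w n = (\<Sum>k<n. step (w k))"

definition graphic :: "(nat \<Rightarrow> bool) \<Rightarrow> real \<Rightarrow> real" where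
  "graphic w x = (let n = nat \<lfloor>x\<rfloor> in
      real_of_int (graph_int w n) + (x - real n) * real_of_int (step (w n)))"

definition bounded_width :: "(nat \<Rightarrow> bool) \<Rightarrow> bool" where
  "bounded_width w \<longleftrightarrow> (\<exists>a b1 b2 :: real. a \<in> \<rat> \<and> b1 \<in> \<rat> \<and> b2 \<in> \<rat> \<and>
     (\<forall>x::real. x \<ge> 0 \<longrightarrow> a * x + b1 \<le> graphic w x \<and> graphic w x \<le> a * x + b2))"

end

theory Submission
  imports Defs "HOL-Library.Infinite_Set"
begin

lemma step_real: "real_of_int (step b) = (if b then 1 else -1)"
  by (simp add: step_def)

lemma graph_diff:
  assumes "i \<le> j"
  shows "real_of_int (graph_int w j - graph_int w i) = 2 * real (count_list (factor w i j) True) - real (j - i)"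
  using assms
proof (induction j rule: dec_induct)
  case base then show ?case by (simp add: factor_def)
next
  case (step j)
  have f: "factor w i (Suc j) = factor w i j @ [w j]" using step.hyps by (simp add: factor_def)
  have g: "graph_int w (Suc j) = graph_int w j + step (w j)" by (simp add: graph_int_def)
  show ?case using step.IH step.hyps unfolding f g by (auto simp: step_def of_nat_diff)
qed

lemma graph_lip: "\<bar>graph_int w n - graph_int w m\<bar> \<le> \<bar>int n - int m\<bar>"
proof -
  have A: "\<bar>graph_int w j - graph_int w i\<bar> \<le> int j - int i" if "i \<le> j" for i j
    using that
  proof (induction j rule: dec_induct)
    case base then show ?case by simp
  next
    case (step j)
    have g: "graph_int w (Suc j) = graph_int w j + step (w j)" by (simp add: graph_int_def)
    show ?case using step unfolding g by (auto simp: step_def)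
  qed
  show ?thesis
    by (cases "m \<le> n") (use A[of m n] A[of n m] in auto)
qed

lemma graph_0: "graph_int w 0 = 0" by (simp add: graph_int_def)

lemma graphic_nat: "graphic w (real n) = real_of_int (graph_int w n)"
  by (simp add: graphic_def)

lemma graphic_close:
  assumes "x \<ge> 0"
  shows "\<bar>graphic w x - real_of_int (graph_int w (nat \<lfloor>x\<rfloor>))\<bar> \<le> 1"
    and "\<bar>x - real (nat \<lfloor>x\<rfloor>)\<bar> \<le> 1"
proof -
  have a: "real (nat \<lfloor>x\<rfloor>) = of_int \<lfloor>x\<rfloor>" using assms by simp
  have b: "0 \<le> x - of_int \<lfloor>x\<rfloor>" "x - of_int \<lfloor>x\<rfloor> \<le> 1" by linarith+
  show "\<bar>graphic w x - real_of_int (graph_int w (nat \<lfloor>x\<rfloor>))\<bar> \<le> 1"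
    unfolding graphic_def Let_def a using b by (auto simp: step_def)
  show "\<bar>x - real (nat \<lfloor>x\<rfloor>)\<bar> \<le> 1" using a b by simp
qed

lemma interval_find:
  assumes "strict_mono (p::nat\<Rightarrow>nat)" "p 0 \<le> n"
  shows "\<exists>i. p i \<le> n \<and> n < p (Suc i)"
  using assms(2)
proof (induction n)
  case 0
  have "p 0 < p (Suc 0)" using assms(1) strict_monoD by blast
  then show ?case using 0 by (intro exI[of _ 0]) auto
next
  case (Suc n)
  show ?case
  proof (cases "Suc n = p 0")
    case True
    have "p 0 < p (Suc 0)" using assms(1) strict_monoD by blast
    then show ?thesis using True by (intro exI[of _ 0]) auto
  next
    case False
    then obtain i where i: "p i \<le> n" "n < p (Suc i)" using Suc by force
    show ?thesis
    proof (cases "Suc n < p (Suc i)")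
      case True then show ?thesis using i by (intro exI[of _ i]) auto
    next
      case False
      then have "Suc n = p (Suc i)" using i by simp
      moreover have "p (Suc i) < p (Suc (Suc i))" using assms(1) strict_monoD by blast
      ultimately show ?thesis by (intro exI[of _ "Suc i"]) auto
    qed
  qed
qed

lemma wap_lin:
  assumes sm: "strict_mono (p::nat\<Rightarrow>nat)"
    and eq: "\<forall>i j a. freq a (factor w (p i) (p (Suc i))) = freq a (factor w (p j) (p (Suc j)))"
  defines "f \<equiv> freq True (factor w (p 0) (p 1))"
  shows "real_of_int (graph_int w (p i)) = real_of_int (graph_int w (p 0)) + (2*f - 1) * (real (p i) - real (p 0))"
proof (induction i)
  case 0 then show ?case by simp
next
  case (Suc i)
  have lt: "p i < p (Suc i)" using sm by (simp add: strict_mono_def)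
  have fi: "freq True (factor w (p i) (p (Suc i))) = f" using eq unfolding f_def by (metis One_nat_def)
  have len: "length (factor w (p i) (p (Suc i))) = p (Suc i) - p i" by (simp add: factor_def)
  have c: "real (count_list (factor w (p i) (p (Suc i))) True) = f * (real (p (Suc i)) - real (p i))"
    using fi lt unfolding freq_def len by (simp add: of_nat_diff field_simps)
  have "real_of_int (graph_int w (p (Suc i)) - graph_int w (p i)) = (2*f - 1) * (real (p (Suc i)) - real (p i))"
    using graph_diff[of "p i" "p (Suc i)" w] lt c by (simp add: of_nat_diff algebra_simps)
  then show ?case using Suc by (simp add: algebra_simps)
qed

lemma part3:
  assumes "bounded_WAP w"
  shows "bounded_width w"
proof -
  obtain p C where sm: "strict_mono (p::nat\<Rightarrow>nat)"
    and eq: "\<forall>i j a. freq a (factor w (p i) (p (Suc i))) = freq a (factor w (p j) (p (Suc j)))"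
    and gap: "\<forall>i. p (Suc i) - p i \<le> C"
    using assms unfolding bounded_WAP_def by blast
  define f where "f = freq True (factor w (p 0) (p 1))"
  define a where "a = 2*f - 1"
  have lin: "real_of_int (graph_int w (p i)) = real_of_int (graph_int w (p 0)) + a * (real (p i) - real (p 0))" for i
    using wap_lin[OF sm eq, of i] unfolding a_def f_def .
  have fQ: "f \<in> \<rat>" unfolding f_def freq_def by simp
  have aQ: "a \<in> \<rat>" unfolding a_def using fQ by simp
  have f01: "0 \<le> f" "f \<le> 1" unfolding f_def freq_def
    using count_le_length[of "factor w (p 0) (p 1)" True]
    by (auto simp: divide_le_eq_1)
  have aabs: "\<bar>a\<bar> \<le> 1" unfolding a_def using f01 by simp
  define B :: real where "B = 2 * real C + 3 * real (p 0)"
  have gl: "\<bar>real_of_int (graph_int w n) - real_of_int (graph_int w m)\<bar> \<le> \<bar>real n - real m\<bar>" for n m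
  proof -
    have "\<bar>real_of_int (graph_int w n - graph_int w m)\<bar> \<le> real_of_int \<bar>int n - int m\<bar>"
      using graph_lip[of w n m] by linarith
    then show ?thesis by simp
  qed
  have mainn: "\<bar>real_of_int (graph_int w n) - a * real n\<bar> \<le> B" for n
  proof (cases "p 0 \<le> n")
    case False
    have "\<bar>real_of_int (graph_int w n)\<bar> \<le> real n" using gl[of n 0] by (simp add: graph_0)
    moreover have "\<bar>a * real n\<bar> \<le> real n" using aabs by (simp add: abs_mult mult_left_le_one_le)
    ultimately show ?thesis unfolding B_def using False by linarith
  next
    case True
    then obtain i where i: "p i \<le> n" "n < p (Suc i)" using interval_find[OF sm] by blast
    have ni0: "n - p i \<le> C" using gap[rule_format, of i] i(2) by linarith
    have ni1: "real n - real (p i) = real (n - p i)" using i(1) by (simp add: of_nat_diff)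
    have ni: "real n - real (p i) \<le> real C" unfolding ni1 using ni0 by simp
    have g1: "\<bar>real_of_int (graph_int w n) - real_of_int (graph_int w (p i))\<bar> \<le> real C"
      using gl[of n "p i"] ni i by linarith
    have g0: "\<bar>real_of_int (graph_int w (p 0))\<bar> \<le> real (p 0)" using gl[of "p 0" 0] by (simp add: graph_0)
    have a0: "\<bar>a * real (p 0)\<bar> \<le> real (p 0)" using aabs by (simp add: abs_mult mult_left_le_one_le)
    have a1: "\<bar>a * (real n - real (p i))\<bar> \<le> real C"
    proof -
      have "\<bar>a\<bar> * \<bar>real n - real (p i)\<bar> \<le> 1 * real C"
        by (rule mult_mono) (use aabs ni i(1) in auto)
      then show ?thesis by (simp add: abs_mult)
    qed
    have "real_of_int (graph_int w n) - a * real n =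
      (real_of_int (graph_int w n) - real_of_int (graph_int w (p i))) + real_of_int (graph_int w (p 0)) - a * real (p 0)
       - a * (real n - real (p i))" using lin[of i] by (simp add: algebra_simps)
    then show ?thesis unfolding B_def using g1 g0 a0 a1 by linarith
  qed
  have mainx: "\<bar>graphic w x - a * x\<bar> \<le> B + 2" if "x \<ge> 0" for x
  proof -
    define n where "n = nat \<lfloor>x\<rfloor>"
    have c1: "\<bar>graphic w x - real_of_int (graph_int w n)\<bar> \<le> 1" using graphic_close(1)[OF that] n_def by simp
    have c2: "\<bar>x - real n\<bar> \<le> 1" using graphic_close(2)[OF that] n_def by simp
    have c3: "\<bar>a * (x - real n)\<bar> \<le> 1"
    proof -
      have "\<bar>a\<bar> * \<bar>x - real n\<bar> \<le> 1 * 1"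
        by (rule mult_mono) (use aabs c2 in auto)
      then show ?thesis by (simp add: abs_mult)
    qed
    have "graphic w x - a * x = (graphic w x - real_of_int (graph_int w n)) + (real_of_int (graph_int w n) - a * real n) - a * (x - real n)"
      by (simp add: algebra_simps)
    then show ?thesis using c1 c3 mainn[of n] by linarith
  qed
  have BQ: "B + 2 \<in> \<rat>" unfolding B_def by simp
  have "a \<in> \<rat> \<and> - (B + 2) \<in> \<rat> \<and> B + 2 \<in> \<rat> \<and>
     (\<forall>x::real. x \<ge> 0 \<longrightarrow> a * x + - (B + 2) \<le> graphic w x \<and> graphic w x \<le> a * x + (B + 2))"
  proof (intro conjI allI impI)
    fix x :: real assume x: "x \<ge> 0"
    show "a * x + - (B + 2) \<le> graphic w x" using mainx[OF x] by (simp add: abs_le_iff)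
    show "graphic w x \<le> a * x + (B + 2)" using mainx[OF x] by (simp add: abs_le_iff)
  qed (simp_all only: Rats_minus_iff aQ BQ)
  then show ?thesis unfolding bounded_width_def by blast
qed

lemma count_bool: "count_list xs False + count_list xs True = length (xs::bool list)"
  by (induction xs) auto

lemma part1:
  assumes "bounded_width w"
  shows "WAP w"
proof -
  obtain a b1 b2 :: real where aQ: "a \<in> \<rat>"
    and bnd: "\<forall>x::real. x \<ge> 0 \<longrightarrow> a * x + b1 \<le> graphic w x \<and> graphic w x \<le> a * x + b2"
    using assms unfolding bounded_width_def by blast
  obtain r q :: int where q: "q > 0" and aq: "a = of_int r / of_int q"
    using Rats_cases'[OF aQ] by metis
  define D where "D n = q * graph_int w n - r * int n" for n
  have Dreal: "real_of_int (D n) = real_of_int q * (real_of_int (graph_int w n) - a * real n)" for n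
    unfolding D_def aq using q by (simp add: field_simps)
  have Db: "real_of_int q * b1 \<le> real_of_int (D n) \<and> real_of_int (D n) \<le> real_of_int q * b2" for n
  proof -
    have "a * real n + b1 \<le> real_of_int (graph_int w n)" "real_of_int (graph_int w n) \<le> a * real n + b2"
      using bnd[rule_format, of "real n"] by (simp_all add: graphic_nat)
    then have "b1 \<le> real_of_int (graph_int w n) - a * real n" "real_of_int (graph_int w n) - a * real n \<le> b2"
      by linarith+
    moreover have "real_of_int q \<ge> 0" using q by simp
    ultimately show ?thesis unfolding Dreal by (simp add: mult_left_mono)
  qed
  have Drange: "D ` UNIV \<subseteq> {\<lceil>real_of_int q * b1\<rceil> .. \<lfloor>real_of_int q * b2\<rfloor>}"
    using Db by (auto simp: ceiling_le_iff le_floor_iff)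
  have fin: "finite (D ` UNIV)" using Drange finite_subset by blast
  obtain n0 where inf: "infinite {n. D n = D n0}"
    using pigeonhole_infinite[OF infinite_UNIV_nat fin] by auto
  define S where "S = {n. D n = D n0}"
  define p where "p = enumerate S"
  have sm: "strict_mono p" unfolding p_def S_def using strict_mono_enumerate[OF inf] .
  have pS: "D (p i) = D n0" for i using enumerate_in_set[OF inf] unfolding p_def S_def by blast
  define F where "F b = (if b then (1 + a) / 2 else (1 - a) / 2)" for b
  have key: "freq b (factor w (p i) (p (Suc i))) = F b" for i b
  proof -
    have lt: "p i < p (Suc i)" using sm strict_monoD by blast
    have "real_of_int q * (real_of_int (graph_int w (p (Suc i))) - a * real (p (Suc i)))
        = real_of_int q * (real_of_int (graph_int w (p i)) - a * real (p i))"
      using pS[of i] pS[of "Suc i"] Dreal by metis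
    then have "real_of_int (graph_int w (p (Suc i))) - a * real (p (Suc i))
        = real_of_int (graph_int w (p i)) - a * real (p i)" using q by simp
    then have gd: "real_of_int (graph_int w (p (Suc i)) - graph_int w (p i)) = a * (real (p (Suc i)) - real (p i))"
      using q by (simp add: algebra_simps)
    define u where "u = factor w (p i) (p (Suc i))"
    have len: "length u = p (Suc i) - p i" by (simp add: u_def factor_def)
    have lenr: "real (length u) = real (p (Suc i)) - real (p i)" using len lt by (simp add: of_nat_diff)
    have ct: "2 * real (count_list u True) - real (length u) = a * real (length u)"
      using graph_diff[of "p i" "p (Suc i)" w] gd lt unfolding u_def[symmetric] len lenr by simp
    have cf: "real (count_list u False) = real (length u) - real (count_list u True)"
      using count_bool[of u] by (simp add: algebra_simps flip: of_nat_add)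
    have lpos: "real (length u) > 0" using lt len by simp
    show ?thesis unfolding u_def[symmetric] freq_def F_def
      using ct cf lpos by (cases b) (simp_all add: field_simps)
  qed
  show ?thesis unfolding WAP_def using sm key by auto
qed

definition sH :: "nat \<Rightarrow> bool" where
  "sH n \<longleftrightarrow> (\<exists>k\<ge>1. 4^k \<le> n \<and> n \<le> 2*4^k)"

definition hH :: "nat \<Rightarrow> int" where
  "hH n = int (n mod 2) + (if sH n then 2 else 0)"

definition wH :: "nat \<Rightarrow> bool" where
  "wH n \<longleftrightarrow> hH n < hH (Suc n)"

lemma hH_step: "hH (Suc n) - hH n = 1 \<or> hH (Suc n) - hH n = -1"
proof (cases "sH n = sH (Suc n)")
  case True
  then show ?thesis unfolding hH_def by (cases "even n") (auto simp: odd_iff_mod_2_eq_one)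
next
  case False
  show ?thesis
  proof (cases "sH n")
    case False
    with \<open>sH n \<noteq> sH (Suc n)\<close> obtain k where k: "k \<ge> 1" "4^k \<le> Suc n" "Suc n \<le> 2*4^k"
      unfolding sH_def by auto
    have "\<not> (4^k \<le> n \<and> n \<le> 2*4^k)" using False k(1) unfolding sH_def by auto
    then have e: "Suc n = 4^k" using k by auto
    have "even (4^k :: nat)" using k(1) by simp
    then have "odd n" using e by (metis even_Suc)
    then have "n mod 2 = 1" by (simp add: odd_iff_mod_2_eq_one)
    moreover have "Suc n mod 2 = 0" using \<open>odd n\<close> by simp
    ultimately show ?thesis unfolding hH_def using False \<open>sH n \<noteq> sH (Suc n)\<close> by simp
  next
    case True
    then obtain k where k: "k \<ge> 1" "4^k \<le> n" "n \<le> 2*4^k" unfolding sH_def by auto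
    have "\<not> (4^k \<le> Suc n \<and> Suc n \<le> 2*4^k)" using True \<open>sH n \<noteq> sH (Suc n)\<close> k(1) unfolding sH_def by auto
    then have e: "n = 2*4^k" using k by auto
    then have "even n" by simp
    then have "n mod 2 = 0" by simp
    moreover have "Suc n mod 2 = 1" using \<open>even n\<close> by presburger
    ultimately show ?thesis unfolding hH_def using True \<open>sH n \<noteq> sH (Suc n)\<close> by simp
  qed
qed

lemma hH_0: "hH 0 = 0"
proof -
  have "\<not> sH 0" unfolding sH_def by simp
  then show ?thesis unfolding hH_def by simp
qed

lemma graph_hH: "graph_int wH n = hH n"
proof (induction n)
  case 0 then show ?case by (simp add: graph_0 hH_0)
next
  case (Suc n)
  have "step (wH n) = hH (Suc n) - hH n" using hH_step[of n] unfolding step_def wH_def by auto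
  then show ?case using Suc by (simp add: graph_int_def)
qed

lemma hH_bnd: "0 \<le> hH n" "hH n \<le> 3"
  unfolding hH_def by auto

lemma part2a: "bounded_width wH"
proof -
  have m: "- 1 \<le> graphic wH x \<and> graphic wH x \<le> 4" if "x \<ge> 0" for x
    using graphic_close(1)[OF that, of wH] hH_bnd[of "nat \<lfloor>x\<rfloor>"] unfolding graph_hH by linarith
  show ?thesis unfolding bounded_width_def
    by (rule exI[of _ 0], rule exI[of _ "-1"], rule exI[of _ 4]) (use m in auto)
qed

lemma sm_ge: "strict_mono (p::nat\<Rightarrow>nat) \<Longrightarrow> p 0 + i \<le> p i"
proof (induction i)
  case 0 then show ?case by simp
next
  case (Suc i)
  then have "p i < p (Suc i)" using strict_monoD by blast
  then show ?case using Suc by simp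
qed

lemma part2b: "\<not> bounded_WAP wH"
proof
  assume "bounded_WAP wH"
  then obtain p C where sm: "strict_mono (p::nat\<Rightarrow>nat)"
    and eq: "\<forall>i j a. freq a (factor wH (p i) (p (Suc i))) = freq a (factor wH (p j) (p (Suc j)))"
    and gap: "\<forall>i. p (Suc i) - p i \<le> C"
    unfolding bounded_WAP_def by blast
  define f where "f = freq True (factor wH (p 0) (p 1))"
  define a where "a = 2*f - 1"
  have lin: "real_of_int (hH (p i)) = real_of_int (hH (p 0)) + a * (real (p i) - real (p 0))" for i
    using wap_lin[OF sm eq, of i] unfolding a_def f_def graph_hH .
  have a0: "a = 0"
  proof (rule ccontr)
    assume an: "a \<noteq> 0"
    obtain i :: nat where i: "4 / \<bar>a\<bar> < real i" using reals_Archimedean2 by blast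
    have "4 < \<bar>a\<bar> * real i" using i an by (simp add: field_simps)
    moreover have "real i \<le> real (p i) - real (p 0)" using sm_ge[OF sm, of i] by linarith
    ultimately have "4 < \<bar>a\<bar> * (real (p i) - real (p 0))"
      by (smt (verit, best) abs_ge_zero mult_left_mono)
    moreover have nn: "0 \<le> real (p i) - real (p 0)" using sm_ge[OF sm, of i] by linarith
    ultimately have "4 < \<bar>a * (real (p i) - real (p 0))\<bar>" by (simp add: abs_mult abs_of_nonneg[OF nn])
    moreover have "\<bar>real_of_int (hH (p i)) - real_of_int (hH (p 0))\<bar> \<le> 3"
      using hH_bnd[of "p i"] hH_bnd[of "p 0"] by linarith
    ultimately show False using lin[of i] by simp
  qed
  define c where "c = hH (p 0)"
  have const: "hH (p i) = c" for i using lin[of i] a0 unfolding c_def by simp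
  define k where "k = p 0 + C + 1"
  define K :: nat where "K = 4^k"
  have k1: "k \<ge> 1" unfolding k_def by simp
  have "k < 2^k" by (rule less_exp)
  also have "(2::nat)^k \<le> 4^k" by (rule power_mono) auto
  finally have Kbig: "p 0 + C + 1 < K" unfolding K_def k_def by simp
  have window: "\<exists>i. m < p i \<and> p i \<le> m + C" if pm: "p 0 \<le> m" for m
  proof -
    obtain i where i: "p i \<le> m" "m < p (Suc i)" using interval_find[OF sm pm] by blast
    have "p (Suc i) \<le> p i + C" using gap[rule_format, of i] by linarith
    then show ?thesis using i by (intro exI[of _ "Suc i"]) auto
  qed
  show False
  proof (cases "c \<ge> 2")
    case True
    obtain i where i: "2*K + 1 < p i" "p i \<le> 2*K + 1 + C" using window[of "2*K+1"] Kbig by auto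
    have "\<not> sH (p i)"
    proof
      assume "sH (p i)"
      then obtain k' where k': "k' \<ge> 1" "4^k' \<le> p i" "p i \<le> 2*4^k'" unfolding sH_def by auto
      show False
      proof (cases "k' \<le> k")
        case True
        then have "(4::nat)^k' \<le> 4^k" by (rule power_increasing) simp
        then show False using k' i unfolding K_def by linarith
      next
        case False
        then have "(4::nat)^(Suc k) \<le> 4^k'" by (intro power_increasing) auto
        then have "4*K \<le> 4^k'" unfolding K_def by simp
        then show False using k' i Kbig by linarith
      qed
    qed
    then have "hH (p i) \<le> 1" unfolding hH_def by simp
    then show False using const[of i] True by simp
  next
    case False
    obtain i where i: "K < p i" "p i \<le> K + C" using window[of K] Kbig by auto
    have "sH (p i)" unfolding sH_def using k1 i Kbig unfolding K_def by (intro exI[of _ k]) auto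
    then have "hH (p i) \<ge> 2" unfolding hH_def by simp
    then show False using const[of i] False by simp
  qed
qed

theorem proposition1:
  shows "(\<forall>w :: nat \<Rightarrow> bool. bounded_width w \<longrightarrow> WAP w)
    \<and> (\<exists>w :: nat \<Rightarrow> bool. bounded_width w \<and> \<not> bounded_WAP w)
    \<and> (\<forall>w :: nat \<Rightarrow> bool. bounded_WAP w \<longrightarrow> bounded_width w)"
  using part1 part2a part2b part3 by blast

end
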